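(* Let $M\in\{0,1\}^{m\times n}$. Then $\operatorname{disc}^{-}(M)\geq \operatorname{disc}^{+}(M)/3$ and $\operatorname{disc}^{+}(M)\geq \operatorname{disc}^{-}(M)/3$; in particular $\operatorname{disc}^+(M)=\Theta(\operatorname{disc}^-(M))$.
   Context: For $M\in\{0,1\}^{m\times n}$, $|M|$ is the number of $1$ entries, $p=|M|/(mn)$, and for $X\subset[m]$, $Y\subset[n]$, $\operatorname{disc}(X,Y)=|M[X\times Y]|-p|X||Y|$, where $|M[X\times Y]|$ is the number of $1$ entries of the submatrix with rows $X$ and columns $Y$. The positive discrepancy is $\operatorname{disc}^{+}(M)=\max_{X\subset[m],Y\subset[n]}\operatorname{disc}(X,Y)$ and the negative discrepancy is $\operatorname{disc}^{-}(M)=\max_{X\subset[m],Y\subset[n]}(-\operatorname{disc}(X,Y))$. *)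

theory Defs
  imports Main Complex_Main
begin

text \<open>A 0/1 matrix with m rows and n columns is represented by
  M :: nat \<Rightarrow> nat \<Rightarrow> bool on rows {..<m} and columns {..<n};
  M i j = True means the (i,j) entry is 1. Values outside the range are irrelevant.\<close>

definition ones :: "(nat \<Rightarrow> nat \<Rightarrow> bool) \<Rightarrow> nat set \<Rightarrow> nat set \<Rightarrow> nat" where
  "ones M X Y = card {(i, j). i \<in> X \<and> j \<in> Y \<and> M i j}"

definition density :: "nat \<Rightarrow> nat \<Rightarrow> (nat \<Rightarrow> nat \<Rightarrow> bool) \<Rightarrow> real" where
  "density m n M = real (ones M {..<m} {..<n}) / (real m * real n)"

definition disc :: "nat \<Rightarrow> nat \<Rightarrow> (nat \<Rightarrow> nat \<Rightarrow> bool) \<Rightarrow> nat set \<Rightarrow> nat set \<Rightarrow> real" where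
  "disc m n M X Y = real (ones M X Y) - density m n M * real (card X) * real (card Y)"

definition disc_pos :: "nat \<Rightarrow> nat \<Rightarrow> (nat \<Rightarrow> nat \<Rightarrow> bool) \<Rightarrow> real" where
  "disc_pos m n M = Max {disc m n M X Y | X Y. X \<subseteq> {..<m} \<and> Y \<subseteq> {..<n}}"

definition disc_neg :: "nat \<Rightarrow> nat \<Rightarrow> (nat \<Rightarrow> nat \<Rightarrow> bool) \<Rightarrow> real" where
  "disc_neg m n M = Max {- disc m n M X Y | X Y. X \<subseteq> {..<m} \<and> Y \<subseteq> {..<n}}"

end

theory Submission
  imports Defs
begin

lemma ones_sum:
  assumes "finite X" "finite Y"
  shows "real (ones M X Y) = (\<Sum>i\<in>X. \<Sum>j\<in>Y. (if M i j then 1 else 0))"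
proof -
  have e: "{(i, j). i \<in> X \<and> j \<in> Y \<and> M i j} = Sigma X (\<lambda>i. {j\<in>Y. M i j})" by auto
  have "ones M X Y = (\<Sum>i\<in>X. card {j\<in>Y. M i j})"
    unfolding ones_def e using assms by (simp add: card_SigmaI)
  also have "\<dots> = (\<Sum>i\<in>X. \<Sum>j\<in>Y. (if M i j then 1 else 0::nat))"
    using assms by (simp add: sum.If_cases Int_def)
  finally have "real (ones M X Y) = real (\<Sum>i\<in>X. \<Sum>j\<in>Y. (if M i j then 1 else 0::nat))" by simp
  also have "\<dots> = (\<Sum>i\<in>X. \<Sum>j\<in>Y. (if M i j then 1 else 0::real))" unfolding of_nat_sum by (intro sum.cong refl) simp
  finally show ?thesis .
qed

lemma disc_sum:
  assumes "finite X" "finite Y"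
  shows "disc m n M X Y = (\<Sum>i\<in>X. \<Sum>j\<in>Y. ((if M i j then 1 else 0) - density m n M))"
  unfolding disc_def using ones_sum[OF assms, of M]
  by (simp add: sum_subtractf)

lemma disc_total: "disc m n M {..<m} {..<n} = 0"
proof (cases "m = 0 \<or> n = 0")
  case True
  then show ?thesis by (auto simp: disc_sum)
next
  case False
  then show ?thesis unfolding disc_def density_def by simp
qed

lemma split4:
  assumes "X \<subseteq> {..<m}" "Y \<subseteq> {..<n}"
  shows "disc m n M X Y + disc m n M X ({..<n} - Y) + disc m n M ({..<m} - X) Y
         + disc m n M ({..<m} - X) ({..<n} - Y) = 0"
proof -
  define w where "w i j = ((if M i j then 1 else 0) - density m n M)" for i j
  have fX: "finite X" using assms finite_subset by blast
  have fY: "finite Y" using assms finite_subset by blast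
  have s1: "(\<Sum>j\<in>{..<n}. w i j) = (\<Sum>j\<in>Y. w i j) + (\<Sum>j\<in>{..<n}-Y. w i j)" for i
    using sum.subset_diff[OF assms(2), of "w i"] by simp
  have s2: "(\<Sum>i\<in>{..<m}. f i) = (\<Sum>i\<in>X. f i) + (\<Sum>i\<in>{..<m}-X. f i)" for f :: "nat \<Rightarrow> real"
    using sum.subset_diff[OF assms(1), of f] by simp
  have "0 = (\<Sum>i\<in>{..<m}. \<Sum>j\<in>{..<n}. w i j)"
    using disc_total[of m n M] by (simp add: disc_sum w_def)
  also have "\<dots> = (\<Sum>i\<in>{..<m}. (\<Sum>j\<in>Y. w i j) + (\<Sum>j\<in>{..<n}-Y. w i j))"
    using s1 by simp
  also have "\<dots> = (\<Sum>i\<in>X. \<Sum>j\<in>Y. w i j) + (\<Sum>i\<in>X. \<Sum>j\<in>{..<n}-Y. w i j)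
      + (\<Sum>i\<in>{..<m}-X. \<Sum>j\<in>Y. w i j) + (\<Sum>i\<in>{..<m}-X. \<Sum>j\<in>{..<n}-Y. w i j)"
    by (simp add: s2 sum.distrib)
  finally show ?thesis using fX fY by (simp add: disc_sum w_def)
qed

lemma fin_ne:
  "finite {f X Y | X Y. X \<subseteq> {..<(m::nat)} \<and> Y \<subseteq> {..<(n::nat)}}"
  "{f X Y | X Y. X \<subseteq> {..<(m::nat)} \<and> Y \<subseteq> {..<(n::nat)}} \<noteq> {}"
proof -
  have "{f X Y | X Y. X \<subseteq> {..<(m::nat)} \<and> Y \<subseteq> {..<(n::nat)}} = (\<lambda>(X,Y). f X Y) ` (Pow {..<m} \<times> Pow {..<n})"
    by auto
  moreover have "finite (Pow {..<m} \<times> Pow {..<n})" by simp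
  ultimately show "finite {f X Y | X Y. X \<subseteq> {..<(m::nat)} \<and> Y \<subseteq> {..<(n::nat)}}" by (metis finite_imageI)
  show "{f X Y | X Y. X \<subseteq> {..<(m::nat)} \<and> Y \<subseteq> {..<(n::nat)}} \<noteq> {}" by blast
qed

lemma pos_le: "X \<subseteq> {..<m} \<Longrightarrow> Y \<subseteq> {..<n} \<Longrightarrow> disc m n M X Y \<le> disc_pos m n M"
  unfolding disc_pos_def by (rule Max_ge[OF fin_ne(1)]) blast

lemma neg_le: "X \<subseteq> {..<m} \<Longrightarrow> Y \<subseteq> {..<n} \<Longrightarrow> - disc m n M X Y \<le> disc_neg m n M"
  unfolding disc_neg_def by (rule Max_ge[OF fin_ne(1)]) blast

lemma pos_attained: "\<exists>X Y. X \<subseteq> {..<m} \<and> Y \<subseteq> {..<n} \<and> disc_pos m n M = disc m n M X Y"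
proof -
  have "disc_pos m n M \<in> {disc m n M X Y | X Y. X \<subseteq> {..<m} \<and> Y \<subseteq> {..<n}}"
    unfolding disc_pos_def by (rule Max_in[OF fin_ne])
  then show ?thesis by blast
qed

lemma neg_attained: "\<exists>X Y. X \<subseteq> {..<m} \<and> Y \<subseteq> {..<n} \<and> disc_neg m n M = - disc m n M X Y"
proof -
  have "disc_neg m n M \<in> {- disc m n M X Y | X Y. X \<subseteq> {..<m} \<and> Y \<subseteq> {..<n}}"
    unfolding disc_neg_def by (rule Max_in[OF fin_ne])
  then show ?thesis by blast
qed

theorem claim2p1:
  fixes m n :: nat and M :: "nat \<Rightarrow> nat \<Rightarrow> bool"
  shows "disc_neg m n M \<ge> disc_pos m n M / 3 \<and> disc_pos m n M \<ge> disc_neg m n M / 3"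
proof
  obtain X Y where XY: "X \<subseteq> {..<m}" "Y \<subseteq> {..<n}" "disc_pos m n M = disc m n M X Y"
    using pos_attained[of m n M] by (elim exE conjE)
  have d: "{..<m} - X \<subseteq> {..<m}" "{..<n} - Y \<subseteq> {..<n}" by auto
  show "disc_neg m n M \<ge> disc_pos m n M / 3"
    using split4[OF XY(1,2), of M] XY(3) neg_le[OF XY(1) d(2), of M] neg_le[OF d(1) XY(2), of M]
      neg_le[OF d(1) d(2), of M] by linarith
next
  obtain X Y where XY: "X \<subseteq> {..<m}" "Y \<subseteq> {..<n}" "disc_neg m n M = - disc m n M X Y"
    using neg_attained[of m n M] by (elim exE conjE)
  have d: "{..<m} - X \<subseteq> {..<m}" "{..<n} - Y \<subseteq> {..<n}" by auto
  show "disc_pos m n M \<ge> disc_neg m n M / 3"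
    using split4[OF XY(1,2), of M] XY(3) pos_le[OF XY(1) d(2), of M] pos_le[OF d(1) XY(2), of M]
      pos_le[OF d(1) d(2), of M] by linarith
qed

end
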